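(* Let $n\geq 2$. If $A$ is an $L_n$-good $n\times n$ matrix, then so is every matrix obtained from $A$ by a cyclic permutation of its rows, i.e. every matrix $B$ with rows $B_i=A_{i+k}$ ($1\leq i\leq n$, indices taken modulo $n$ in $\{1,\ldots,n\}$) for some fixed integer $k$. In particular, the matrix $C$ with $C_{i,n+1-i}=1$ for $1\leq i\leq n$ and all other entries $0$ is $L_n$-good.
   Context: For $n\geq 2$, the Lucas cube $L_n$ is identified with the set of vectors $\vec{x}=(x_1,\ldots,x_n)\in\mathbb{Z}_2^n$ with no two cyclically adjacent ones: there is no $i\in\{1,\ldots,n-1\}$ with $x_i=x_{i+1}=1$, and not both $x_1=1$ and $x_n=1$. An $n\times n$ matrix $A$ over $\mathbb{Z}_2$ is $L_n$-good if it is invertible and $A\vec{x}\in L_n$ for all $\vec{x}\in L_n$. $A_i$ denotes the $i$-th row of $A$. *)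

theory Defs
  imports "Jordan_Normal_Form.Matrix" "HOL-Library.Z2"
begin

text \<open>Vectors in Z_2^n are bit vectors of dimension n, indexed 0..n-1
  (paper index i corresponds to index i-1 here).\<close>

definition lucas_cube :: "nat \<Rightarrow> bit vec set" where
  "lucas_cube n = {x. dim_vec x = n
      \<and> (\<forall>i. i + 1 < n \<longrightarrow> \<not> (x $ i = 1 \<and> x $ (i + 1) = 1))
      \<and> \<not> (x $ 0 = 1 \<and> x $ (n - 1) = 1)}"

definition Ln_good :: "nat \<Rightarrow> bit mat \<Rightarrow> bool" where
  "Ln_good n A \<longleftrightarrow> A \<in> carrier_mat n n \<and> invertible_mat A
      \<and> (\<forall>x \<in> lucas_cube n. A *\<^sub>v x \<in> lucas_cube n)"

definition row_shift :: "nat \<Rightarrow> int \<Rightarrow> bit mat \<Rightarrow> bit mat" where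
  "row_shift n k A = mat n n (\<lambda>(i, j). A $$ (nat ((int i + k) mod int n), j))"

definition antidiag :: "nat \<Rightarrow> bit mat" where
  "antidiag n = mat n n (\<lambda>(i, j). if j = n - 1 - i then 1 else 0)"

end

theory Submission imports Defs begin

definition pm :: "nat \<Rightarrow> (nat \<Rightarrow> nat) \<Rightarrow> bit mat" where
  "pm n f = mat n n (\<lambda>(i, j). if j = f i then 1 else 0)"

lemma pm_carrier[simp]: "pm n f \<in> carrier_mat n n" unfolding pm_def by simp

lemma pm_mult: assumes f: "\<And>i. i < n \<Longrightarrow> f i < n" and M: "M \<in> carrier_mat n m"
  shows "pm n f * M = mat n m (\<lambda>(i, j). M $$ (f i, j))"
proof (rule eq_matI)
  fix i j assume i: "i < dim_row (mat n m (\<lambda>(i, j). M $$ (f i, j)))"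
    and j: "j < dim_col (mat n m (\<lambda>(i, j). M $$ (f i, j)))"
  have i': "i < n" and j': "j < m" using i j by auto
  have r: "row (pm n f) i = unit_vec n (f i)"
    using i' unfolding pm_def by (intro eq_vecI) (auto simp: unit_vec_def)
  have c: "col M j \<in> carrier_vec n" using M by auto
  have "(pm n f * M) $$ (i, j) = row (pm n f) i \<bullet> col M j"
    using i' j' M by (simp add: pm_def)
  also have "\<dots> = col M j $ f i" unfolding r using scalar_prod_left_unit[OF c f[OF i']] .
  also have "\<dots> = M $$ (f i, j)" using M j' f[OF i'] by simp
  finally show "(pm n f * M) $$ (i, j) = mat n m (\<lambda>(i, j). M $$ (f i, j)) $$ (i, j)" using i' j' by simp
qed (use M in \<open>auto simp: pm_def\<close>)

lemma pm_pm: assumes f: "\<And>i. i < n \<Longrightarrow> f i < n" and g: "\<And>i. i < n \<Longrightarrow> g (f i) = i"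
  shows "pm n f * pm n g = 1\<^sub>m n"
proof -
  have "pm n f * pm n g = mat n n (\<lambda>(i, j). pm n g $$ (f i, j))" by (rule pm_mult[OF f]) simp_all
  also have "\<dots> = 1\<^sub>m n" by (rule eq_matI) (auto simp: pm_def f g)
  finally show ?thesis .
qed

lemma invertible_pm: assumes f: "\<And>i. i < n \<Longrightarrow> f i < n" and g: "\<And>i. i < n \<Longrightarrow> g i < n"
  and fg: "\<And>i. i < n \<Longrightarrow> g (f i) = i" and gf: "\<And>i. i < n \<Longrightarrow> f (g i) = i"
  shows "invertible_mat (pm n f)"
  unfolding invertible_mat_def inverts_mat_def
  using pm_pm[of n f g, OF f fg] pm_pm[of n g f, OF g gf]
  by (intro conjI exI[of _ "pm n g"]) (auto simp: pm_def square_mat.simps)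

lemma inv_carrier: assumes A: "A \<in> carrier_mat n n" and "invertible_mat A"
  obtains B where "B \<in> carrier_mat n n" "A * B = 1\<^sub>m n" "B * A = 1\<^sub>m n"
proof -
  obtain B where AB: "A * B = 1\<^sub>m n" and BA: "B * A = 1\<^sub>m (dim_row B)"
    using assms unfolding invertible_mat_def inverts_mat_def by auto
  have "dim_col B = n" using arg_cong[OF AB, of dim_col] by simp
  moreover have "dim_row B = n" using arg_cong[OF BA, of dim_col] A by simp
  ultimately show ?thesis using that AB BA by auto
qed

lemma invertible_mult: assumes A: "A \<in> carrier_mat n n" and B: "B \<in> carrier_mat n n"
  and iA: "invertible_mat A" and iB: "invertible_mat B"
  shows "invertible_mat (A * B)"
proof -
  obtain A' where A': "A' \<in> carrier_mat n n" "A * A' = 1\<^sub>m n" "A' * A = 1\<^sub>m n"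
    using inv_carrier[OF A iA] by blast
  obtain B' where B': "B' \<in> carrier_mat n n" "B * B' = 1\<^sub>m n" "B' * B = 1\<^sub>m n"
    using inv_carrier[OF B iB] by blast
  have "(A * B) * (B' * A') = A * (B * (B' * A'))" using A B A' B' by (metis assoc_mult_mat mult_carrier_mat)
  also have "B * (B' * A') = (B * B') * A'" using A B A' B' by (metis assoc_mult_mat)
  also have "\<dots> = A'" using B' A' by simp
  also have "A * A' = 1\<^sub>m n" using A' by simp
  finally have 1: "(A * B) * (B' * A') = 1\<^sub>m n" .
  have "(B' * A') * (A * B) = B' * (A' * (A * B))" using A B A' B' by (metis assoc_mult_mat mult_carrier_mat)
  also have "A' * (A * B) = (A' * A) * B" using A B A' B' by (metis assoc_mult_mat)
  also have "\<dots> = B" using A' B by simp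
  also have "B' * B = 1\<^sub>m n" using B' by simp
  finally have 2: "(B' * A') * (A * B) = 1\<^sub>m n" .
  show ?thesis unfolding invertible_mat_def inverts_mat_def
    using 1 2 A B A' B' by (intro conjI exI[of _ "B' * A'"]) (auto simp: square_mat.simps)
qed

lemma lucas_alt: assumes "n \<ge> 2"
  shows "y \<in> lucas_cube n \<longleftrightarrow> dim_vec y = n \<and> (\<forall>i<n. \<not> (y $ i = 1 \<and> y $ ((i+1) mod n) = 1))"
proof -
  have "(\<forall>i<n. \<not> (y $ i = 1 \<and> y $ ((i+1) mod n) = 1)) \<longleftrightarrow>
     (\<forall>i. i + 1 < n \<longrightarrow> \<not> (y $ i = 1 \<and> y $ (i + 1) = 1)) \<and> \<not> (y $ 0 = 1 \<and> y $ (n - 1) = 1)"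
  proof
    assume h: "\<forall>i<n. \<not> (y $ i = 1 \<and> y $ ((i+1) mod n) = 1)"
    have "\<not> (y $ i = 1 \<and> y $ (i + 1) = 1)" if "i + 1 < n" for i
      using h[rule_format, of i] that by (simp add: mod_less)
    moreover have "\<not> (y $ 0 = 1 \<and> y $ (n - 1) = 1)"
      using h[rule_format, of "n-1"] assms by auto
    ultimately show "(\<forall>i. i + 1 < n \<longrightarrow> \<not> (y $ i = 1 \<and> y $ (i + 1) = 1)) \<and> \<not> (y $ 0 = 1 \<and> y $ (n - 1) = 1)"
      by blast
  next
    assume h: "(\<forall>i. i + 1 < n \<longrightarrow> \<not> (y $ i = 1 \<and> y $ (i + 1) = 1)) \<and> \<not> (y $ 0 = 1 \<and> y $ (n - 1) = 1)"
    show "\<forall>i<n. \<not> (y $ i = 1 \<and> y $ ((i+1) mod n) = 1)"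
    proof (intro allI impI)
      fix i assume i: "i < n"
      show "\<not> (y $ i = 1 \<and> y $ ((i+1) mod n) = 1)"
      proof (cases "i+1 < n")
        case True then show ?thesis using h by (simp add: mod_less)
      next
        case False then have "i + 1 = n" using i by simp
        then have "i = n-1" "(i+1) mod n = 0" by auto
        then show ?thesis using h by auto
      qed
    qed
  qed
  then show ?thesis unfolding lucas_cube_def by auto
qed

lemma shift_mult: assumes A: "A \<in> carrier_mat n n" and x: "dim_vec x = n" and i: "i < n"
  shows "(row_shift n k A *\<^sub>v x) $ i = (A *\<^sub>v x) $ nat ((int i + k) mod int n)"
proof -
  have "nat ((int i + k) mod int n) < n" using i by (simp add: nat_less_iff)
  then have "row (row_shift n k A) i = row A (nat ((int i + k) mod int n))"
    using A i unfolding row_shift_def by (intro eq_vecI) auto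
  moreover have "dim_row (row_shift n k A) = n" unfolding row_shift_def by simp
  ultimately show ?thesis using A x i \<open>nat ((int i + k) mod int n) < n\<close> by simp
qed

lemma anti_row: "i < n \<Longrightarrow> row (antidiag n) i = unit_vec n (n - 1 - i)"
  unfolding antidiag_def by (intro eq_vecI) (auto simp: unit_vec_def)

lemma anti_dim: "dim_row (antidiag n) = n" unfolding antidiag_def by simp

lemma anti_mult: assumes x: "dim_vec x = n" and i: "i < n"
  shows "(antidiag n *\<^sub>v x) $ i = x $ (n - 1 - i)"
proof -
  have "(antidiag n *\<^sub>v x) $ i = row (antidiag n) i \<bullet> x" by (rule index_mult_mat_vec) (simp add: anti_dim i)
  also have "\<dots> = unit_vec n (n - 1 - i) \<bullet> x" by (simp only: anti_row[OF i])
  also have "\<dots> = x $ (n - 1 - i)" by (rule scalar_prod_left_unit) (use x i in auto)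
  finally show ?thesis .
qed

lemma sig_succ: assumes "n > 0" "i < n"
  shows "nat ((int ((i+1) mod n) + k) mod int n) = (nat ((int i + k) mod int n) + 1) mod n"
proof -
  have "int (nat ((int ((i+1) mod n) + k) mod int n)) = (int i + 1 + k) mod int n"
  proof -
    have "int (nat ((int ((i+1) mod n) + k) mod int n)) = ((int i + 1) mod int n + k) mod int n"
      using assms by (simp add: zmod_int add.commute)
    also have "\<dots> = (int i + 1 + k) mod int n" by (simp add: mod_add_left_eq)
    finally show ?thesis .
  qed
  moreover have "int ((nat ((int i + k) mod int n) + 1) mod n) = (int i + 1 + k) mod int n"
    using assms by (simp add: zmod_int mod_add_right_eq add.commute add.left_commute)
  ultimately show ?thesis by linarith
qed

lemma sig_inv: assumes "n > 0" "j < n"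
  shows "nat ((int (nat ((int j - k) mod int n)) + k) mod int n) = j" "nat ((int j - k) mod int n) < n"
proof -
  have "int (nat ((int (nat ((int j - k) mod int n)) + k) mod int n)) = int j"
    using assms by (simp add: mod_add_left_eq)
  then show "nat ((int (nat ((int j - k) mod int n)) + k) mod int n) = j" by linarith
  show "nat ((int j - k) mod int n) < n" using assms by (simp add: nat_less_iff)
qed

theorem corollary3:
  fixes n :: nat
  assumes "n \<ge> 2"
  shows "(\<forall>A k. Ln_good n A \<longrightarrow> Ln_good n (row_shift n k A)) \<and> Ln_good n (antidiag n)"
proof
  have n0: "n > 0" using assms by simp
  show "\<forall>A k. Ln_good n A \<longrightarrow> Ln_good n (row_shift n k A)"
  proof (intro allI impI)
    fix A k assume g: "Ln_good n A"
    then have A: "A \<in> carrier_mat n n" and iA: "invertible_mat A"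
      and L: "\<forall>x \<in> lucas_cube n. A *\<^sub>v x \<in> lucas_cube n" unfolding Ln_good_def by auto
    define \<sigma> where "\<sigma> i = nat ((int i + k) mod int n)" for i
    have sl: "\<sigma> i < n" for i using n0 unfolding \<sigma>_def by (simp add: nat_less_iff)
    have S: "row_shift n k A \<in> carrier_mat n n" unfolding row_shift_def by simp
    have M: "(row_shift n k A *\<^sub>v x) $ i = (A *\<^sub>v x) $ \<sigma> i" if "dim_vec x = n" "i < n" for x i
      using shift_mult[OF A that] unfolding \<sigma>_def .
    define \<tau> where "\<tau> i = nat ((int i - k) mod int n)" for i
    have tl: "\<tau> i < n" for i using n0 unfolding \<tau>_def by (simp add: nat_less_iff)
    have st: "\<sigma> (\<tau> i) = i" if "i < n" for i using sig_inv[OF n0 that, of k] unfolding \<sigma>_def \<tau>_def by auto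
    have ts: "\<tau> (\<sigma> i) = i" if "i < n" for i using sig_inv[OF n0 that, of "-k"] unfolding \<sigma>_def \<tau>_def by auto
    have eq: "row_shift n k A = pm n \<sigma> * A"
      unfolding pm_mult[OF sl A] row_shift_def \<sigma>_def ..
    have "invertible_mat (row_shift n k A)" unfolding eq
      by (rule invertible_mult[OF pm_carrier A invertible_pm[OF sl tl ts st] iA])
    moreover have "row_shift n k A *\<^sub>v x \<in> lucas_cube n" if x: "x \<in> lucas_cube n" for x
    proof -
      have dx: "dim_vec x = n" using x unfolding lucas_cube_def by simp
      have y: "A *\<^sub>v x \<in> lucas_cube n" using L x by auto
      then have yc: "\<forall>i<n. \<not> ((A *\<^sub>v x) $ i = 1 \<and> (A *\<^sub>v x) $ ((i+1) mod n) = 1)"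
        using lucas_alt[OF assms] by auto
      have "\<not> ((row_shift n k A *\<^sub>v x) $ i = 1 \<and> (row_shift n k A *\<^sub>v x) $ ((i+1) mod n) = 1)"
        if i: "i < n" for i
      proof -
        have "\<sigma> ((i+1) mod n) = (\<sigma> i + 1) mod n" using sig_succ[OF n0 i] unfolding \<sigma>_def .
        moreover have "(i+1) mod n < n" using n0 by simp
        ultimately show ?thesis using M[OF dx i] M[OF dx, of "(i+1) mod n"] yc sl[of i] by auto
      qed
      moreover have "dim_vec (row_shift n k A *\<^sub>v x) = n" using S by simp
      ultimately show ?thesis using lucas_alt[OF assms] by auto
    qed
    ultimately show "Ln_good n (row_shift n k A)" unfolding Ln_good_def using S by auto
  qed
next
  have n0: "n > 0" using assms by simp
  have S: "antidiag n \<in> carrier_mat n n" unfolding antidiag_def by simp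
  have eq: "antidiag n = pm n (\<lambda>i. n - 1 - i)" unfolding antidiag_def pm_def ..
  have "invertible_mat (antidiag n)" unfolding eq
    by (rule invertible_pm[where g="\<lambda>i. n - 1 - i"]) auto
  moreover have "antidiag n *\<^sub>v x \<in> lucas_cube n" if x: "x \<in> lucas_cube n" for x
  proof -
    have dx: "dim_vec x = n" using x unfolding lucas_cube_def by simp
    have xc: "\<forall>i<n. \<not> (x $ i = 1 \<and> x $ ((i+1) mod n) = 1)"
      using x lucas_alt[OF assms] by auto
    have "\<not> ((antidiag n *\<^sub>v x) $ i = 1 \<and> (antidiag n *\<^sub>v x) $ ((i+1) mod n) = 1)"
      if i: "i < n" for i
    proof -
      define j where "j = n - 1 - (i+1) mod n"
      have "j < n" "(j + 1) mod n = n - 1 - i"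
      proof -
        show "j < n" unfolding j_def using n0 by simp
        show "(j + 1) mod n = n - 1 - i"
        proof (cases "i + 1 < n")
          case True then show ?thesis unfolding j_def by (simp add: mod_less)
        next
          case False then have "i = n - 1" using i by simp
          then show ?thesis unfolding j_def using n0 by simp
        qed
      qed
      moreover have "(i+1) mod n < n" using n0 by simp
      ultimately show ?thesis using anti_mult[OF dx i] anti_mult[OF dx, of "(i+1) mod n"] xc[rule_format, of j]
        unfolding j_def by auto
    qed
    moreover have "dim_vec (antidiag n *\<^sub>v x) = n" using S by simp
    ultimately show ?thesis using lucas_alt[OF assms] by auto
  qed
  ultimately show "Ln_good n (antidiag n)" unfolding Ln_good_def using S by auto
qed

end
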